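(* Let $D\subset\mathbb R^n$ be a domain, $\theta\in(-\pi,\pi]$, and let $k\in C^2([0,1]\times D)$ satisfy the degenerate special Lagrangian equation $$\mathrm{Im}\big(e^{-\sqrt{-1}\theta}\det(I_n+\sqrt{-1}\nabla^2k)\big)=0,\qquad \mathrm{Re}\big(e^{-\sqrt{-1}\theta}\det(I+\sqrt{-1}\nabla_x^2k)\big)>0$$ at every point. Let $M(t,x)=\mathrm{Re}\big(e^{-\sqrt{-1}\theta}\mathrm{cof}(I_n+\sqrt{-1}\nabla^2k(t,x))\big)$, so that the linearization of $u\mapsto\mathrm{Im}(e^{-\sqrt{-1}\theta}\det(I_n+\sqrt{-1}\nabla^2u))$ at $k$ is $\psi\mapsto\mathrm{tr}(M\nabla^2\psi)$. Then at every point $(t,x)$ with $\nabla\dot k(t,x)\ne0$, the matrix $M(t,x)$ is positive semidefinite with exactly one zero eigenvalue and its null space is spanned by $\nabla\dot k(t,x)$; at every critical point of $\dot k$ (i.e. $\nabla\dot k(t,x)=0$), $M(t,x)$ is positive semidefinite with exactly one nonzero eigenvalue.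
   Context: Coordinates on $[0,1]\times D$ are $(t,x)$; $\nabla^2$ is the full $(n+1)\times(n+1)$ Hessian in $(t,x)$ (with $t$ as the $0$-th coordinate), $\nabla^2_x$ the $n\times n$ Hessian in $x$, $\dot k=\partial_tk$, and $\nabla\dot k$ its full gradient in $(t,x)$. $I_n=\mathrm{diag}(0,1,\dots,1)\in\mathrm{Sym}(\mathbb R^{n+1})$, $I$ the $n\times n$ identity, $\mathrm{cof}$ the cofactor matrix. *)

theory Defs
  imports "HOL-Analysis.Analysis"
begin

text \<open>Coordinates on [0,1] x D inside R^(n+1): a point p :: real^('n::finite option) has
  time coordinate p $ None and space coordinates p $ Some i.\<close>

definition time_coord :: "real^('n::finite option) \<Rightarrow> real" where
  "time_coord p = p $ None"

definition space_part :: "real^('n::finite option) \<Rightarrow> real^'n" where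
  "space_part p = (\<chi> i. p $ Some i)"

definition cyl :: "(real^'n::finite) set \<Rightarrow> (real^('n::finite option)) set" where
  "cyl D = {p. time_coord p \<in> {0..1} \<and> space_part p \<in> D}"

text \<open>I_n = diag(0,1,...,1) in Sym(R^(n+1)), the 0-th (time) entry being 0.\<close>
definition In_mat :: "real^('n::finite option)^('n::finite option)" where
  "In_mat = (\<chi> i j. if i = j \<and> i \<noteq> None then 1 else 0)"

text \<open>Spatial block of an (n+1)x(n+1) matrix (the x-Hessian when applied to the full Hessian).\<close>
definition space_block :: "'a^('n::finite option)^('n::finite option) \<Rightarrow> 'a^'n::finite^'n" where
  "space_block A = (\<chi> i j. A $ Some i $ Some j)"

definition cmat :: "real^'n^'m \<Rightarrow> complex^'n^'m" where
  "cmat A = (\<chi> i j. complex_of_real (A $ i $ j))"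

definition cscale :: "complex \<Rightarrow> complex^'n::finite^'m::finite \<Rightarrow> complex^'n^'m" where
  "cscale c A = (\<chi> i j. c * A $ i $ j)"

definition Re_mat :: "complex^'n^'m \<Rightarrow> real^'n^'m" where
  "Re_mat A = (\<chi> i j. Re (A $ i $ j))"

text \<open>Cofactor matrix: cof(A)_(ij) = (-1)^(i+j) det(A with row i and column j deleted),
  which equals det of A with row i replaced by the j-th unit row vector (Laplace expansion);
  the latter form is used since the index type carries no ordering.\<close>
definition cof :: "'a::comm_ring_1^'n::finite^'n \<Rightarrow> 'a^'n::finite^'n" where
  "cof A = (\<chi> i j. det (\<chi> r c. if r = i then (if c = j then 1 else 0) else A $ r $ c))"

definition psd :: "real^'n::finite^'n \<Rightarrow> bool" where
  "psd M \<longleftrightarrow> transpose M = M \<and> (\<forall>w. 0 \<le> w \<bullet> (M *v w))"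

definition null_space :: "real^'n^'m \<Rightarrow> (real^'n::finite) set" where
  "null_space M = {w. M *v w = 0}"

definition lin_mat :: "real \<Rightarrow> real^('n::finite option)^('n option) \<Rightarrow> real^('n option)^('n option)" where
  "lin_mat \<theta> A = Re_mat (cscale (exp (- \<i> * complex_of_real \<theta>)) (cof (cmat In_mat + cscale \<i> (cmat A))))"

end

theory Submission
  imports Defs
begin


lemma mixed_mvt:
  fixes k :: "real^'m::finite \<Rightarrow> real" and g :: "real^'m \<Rightarrow> real^'m"
    and H :: "real^'m \<Rightarrow> real^'m^'m"
  assumes grad: "\<And>q. q \<in> S \<Longrightarrow> (k has_derivative (\<lambda>h. g q \<bullet> h)) (at q within S)"
    and hess: "\<And>q. q \<in> S \<Longrightarrow> (g has_derivative (\<lambda>h. H q *v h)) (at q within S)"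
    and box: "\<And>a b. a \<in> {0..s} \<Longrightarrow> b \<in> {0..s} \<Longrightarrow> p + a *\<^sub>R u + b *\<^sub>R v \<in> S"
    and s: "0 < s"
  shows "\<exists>a b. a \<in> {0..s} \<and> b \<in> {0..s} \<and>
     k (p + s *\<^sub>R u + s *\<^sub>R v) - k (p + s *\<^sub>R u) - k (p + s *\<^sub>R v) + k p
       = s * (s * ((H (p + a *\<^sub>R u + b *\<^sub>R v) *v u) \<bullet> v))"
proof -
  define \<phi> where "\<phi> b = k (p + s *\<^sub>R u + b *\<^sub>R v) - k (p + b *\<^sub>R v)" for b
  have dk: "((\<lambda>b. k (c + b *\<^sub>R v)) has_derivative (\<lambda>h. h * (g (c + x *\<^sub>R v) \<bullet> v))) (at x within {0..s})"
    if "x \<in> {0..s}" and cS: "\<And>b. b \<in> {0..s} \<Longrightarrow> c + b *\<^sub>R v \<in> S" for c x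
  proof -
    have d1: "((\<lambda>b. c + b *\<^sub>R v) has_derivative (\<lambda>h. h *\<^sub>R v)) (at x within {0..s})"
      by (auto intro!: derivative_eq_intros)
    have d2: "(k has_derivative (\<lambda>h. g (c + x *\<^sub>R v) \<bullet> h)) (at (c + x *\<^sub>R v) within ((\<lambda>b. c + b *\<^sub>R v) ` {0..s}))"
      by (rule has_derivative_subset[OF grad]) (use that in auto)
    from diff_chain_within[OF d1 d2] show ?thesis
      by (simp add: o_def mult.commute)
  qed
  have "\<exists>x\<in>{0<..<s}. \<phi> s - \<phi> 0 = s * ((g (p + s *\<^sub>R u + x *\<^sub>R v) - g (p + x *\<^sub>R v)) \<bullet> v)"
  proof -
    have "\<exists>x\<in>{0<..<s}. \<phi> s - \<phi> 0 = (\<lambda>h. h * ((g (p + s *\<^sub>R u + x *\<^sub>R v) - g (p + x *\<^sub>R v)) \<bullet> v)) (s - 0)"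
    proof (rule mvt_simple[OF s])
      fix x assume x: "0 \<le> x" "x \<le> s"
      have A: "((\<lambda>b. k ((p + s *\<^sub>R u) + b *\<^sub>R v)) has_derivative (\<lambda>h. h * (g ((p + s *\<^sub>R u) + x *\<^sub>R v) \<bullet> v))) (at x within {0..s})"
        by (rule dk) (use x box s in auto)
      have B: "((\<lambda>b. k (p + b *\<^sub>R v)) has_derivative (\<lambda>h. h * (g (p + x *\<^sub>R v) \<bullet> v))) (at x within {0..s})"
        by (rule dk) (use x box[of 0] s in auto)
      show "(\<phi> has_derivative (\<lambda>h. h * ((g (p + s *\<^sub>R u + x *\<^sub>R v) - g (p + x *\<^sub>R v)) \<bullet> v))) (at x within {0..s})"
        unfolding \<phi>_def using has_derivative_diff[OF A B]
        by (simp add: inner_diff_left algebra_simps)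
    qed
    then show ?thesis by simp
  qed
  then obtain b where b: "b \<in> {0<..<s}" and eq1: "\<phi> s - \<phi> 0 = s * ((g (p + s *\<^sub>R u + b *\<^sub>R v) - g (p + b *\<^sub>R v)) \<bullet> v)"
    by blast
  define \<psi> where "\<psi> a = g (p + a *\<^sub>R u + b *\<^sub>R v) \<bullet> v" for a
  have "\<exists>x\<in>{0<..<s}. \<psi> s - \<psi> 0 = (\<lambda>h. h * ((H (p + x *\<^sub>R u + b *\<^sub>R v) *v u) \<bullet> v)) (s - 0)"
  proof (rule mvt_simple[OF s])
    fix x assume x: "0 \<le> x" "x \<le> s"
    have d1: "((\<lambda>a. p + a *\<^sub>R u + b *\<^sub>R v) has_derivative (\<lambda>h. h *\<^sub>R u)) (at x within {0..s})"
      by (auto intro!: derivative_eq_intros)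
    have d2: "(g has_derivative (\<lambda>h. H (p + x *\<^sub>R u + b *\<^sub>R v) *v h)) (at (p + x *\<^sub>R u + b *\<^sub>R v) within ((\<lambda>a. p + a *\<^sub>R u + b *\<^sub>R v) ` {0..s}))"
      by (rule has_derivative_subset[OF hess]) (use x b box in auto)
    have d3: "((\<lambda>a. g (p + a *\<^sub>R u + b *\<^sub>R v)) has_derivative (\<lambda>h. H (p + x *\<^sub>R u + b *\<^sub>R v) *v (h *\<^sub>R u))) (at x within {0..s})"
      using diff_chain_within[OF d1 d2] by (simp add: o_def)
    have d4: "((\<lambda>a. g (p + a *\<^sub>R u + b *\<^sub>R v) \<bullet> v) has_derivative (\<lambda>h. (H (p + x *\<^sub>R u + b *\<^sub>R v) *v (h *\<^sub>R u)) \<bullet> v)) (at x within {0..s})"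
      using has_derivative_inner_left[OF d3] .
    show "(\<psi> has_derivative (\<lambda>h. h * ((H (p + x *\<^sub>R u + b *\<^sub>R v) *v u) \<bullet> v))) (at x within {0..s})"
      unfolding \<psi>_def using d4 by (simp add: matrix_vector_mult_scaleR mult.commute)
  qed
  then obtain a where a: "a \<in> {0<..<s}" and eq2: "\<psi> s - \<psi> 0 = s * ((H (p + a *\<^sub>R u + b *\<^sub>R v) *v u) \<bullet> v)"
    by auto
  have "k (p + s *\<^sub>R u + s *\<^sub>R v) - k (p + s *\<^sub>R u) - k (p + s *\<^sub>R v) + k p = \<phi> s - \<phi> 0"
    by (simp add: \<phi>_def)
  also have "\<dots> = s * (\<psi> s - \<psi> 0)"
    by (simp add: eq1 \<psi>_def inner_diff_left)
  finally show ?thesis using a b eq2 by (intro exI[of _ a] exI[of _ b]) auto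
qed

lemma cont_quad:
  fixes H :: "'a::topological_space \<Rightarrow> real^'m::finite^'m"
  assumes "continuous_on S H"
  shows "continuous_on S (\<lambda>q. (H q *v u) \<bullet> v)"
proof -
  have "(\<lambda>q. (H q *v u) \<bullet> v) = (\<lambda>q. \<Sum>i\<in>UNIV. (\<Sum>j\<in>UNIV. H q $ i $ j * u $ j) * v $ i)"
    by (simp add: inner_vec_def matrix_vector_mult_def)
  then show ?thesis
    by (simp only:) (intro continuous_intros assms)
qed

lemma hess_sym_dir:
  fixes k :: "real^'m::finite \<Rightarrow> real" and g :: "real^'m \<Rightarrow> real^'m"
    and H :: "real^'m \<Rightarrow> real^'m^'m"
  assumes grad: "\<And>q. q \<in> S \<Longrightarrow> (k has_derivative (\<lambda>h. g q \<bullet> h)) (at q within S)"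
    and hess: "\<And>q. q \<in> S \<Longrightarrow> (g has_derivative (\<lambda>h. H q *v h)) (at q within S)"
    and cont: "continuous_on S H" and pS: "p \<in> S" and d: "0 < \<delta>"
    and box: "\<And>a b. a \<in> {0..\<delta>} \<Longrightarrow> b \<in> {0..\<delta>} \<Longrightarrow> p + a *\<^sub>R u + b *\<^sub>R v \<in> S"
  shows "(H p *v u) \<bullet> v = (H p *v v) \<bullet> u"
proof (rule ccontr)
  define L1 where "L1 q = (H q *v u) \<bullet> v" for q
  define L2 where "L2 q = (H q *v v) \<bullet> u" for q
  assume ne: "(H p *v u) \<bullet> v \<noteq> (H p *v v) \<bullet> u"
  define e where "e = \<bar>L1 p - L2 p\<bar> / 2"
  have e: "e > 0" using ne by (simp add: e_def L1_def L2_def)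
  have c1: "continuous_on S L1" unfolding L1_def by (rule cont_quad[OF cont])
  have c2: "continuous_on S L2" unfolding L2_def by (rule cont_quad[OF cont])
  obtain d1 where d1: "d1 > 0" "\<And>q. q \<in> S \<Longrightarrow> dist q p < d1 \<Longrightarrow> dist (L1 q) (L1 p) < e"
    using c1 pS e unfolding continuous_on_iff by metis
  obtain d2 where d2: "d2 > 0" "\<And>q. q \<in> S \<Longrightarrow> dist q p < d2 \<Longrightarrow> dist (L2 q) (L2 p) < e"
    using c2 pS e unfolding continuous_on_iff by metis
  define s where "s = min \<delta> (min d1 d2 / (2 * (norm u + norm v + 1)))"
  have npos: "norm u + norm v + 1 > 0" by (simp add: add_nonneg_pos)
  have s0: "0 < s" using d d1 d2 npos by (simp add: s_def)
  have sd: "s \<le> \<delta>" by (simp add: s_def)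
  have sb: "s * (norm u + norm v + 1) \<le> min d1 d2 / 2"
  proof -
    have "s \<le> min d1 d2 / (2 * (norm u + norm v + 1))" by (simp add: s_def)
    then have "s * (norm u + norm v + 1) \<le> min d1 d2 / (2 * (norm u + norm v + 1)) * (norm u + norm v + 1)"
      using npos by (intro mult_right_mono) auto
    also have "\<dots> = min d1 d2 / 2" using npos by (simp add: field_simps)
    finally show ?thesis .
  qed
  have box': "\<And>a b. a \<in> {0..s} \<Longrightarrow> b \<in> {0..s} \<Longrightarrow> p + a *\<^sub>R u + b *\<^sub>R v \<in> S"
    using box sd by auto
  have box'': "\<And>a b. a \<in> {0..s} \<Longrightarrow> b \<in> {0..s} \<Longrightarrow> p + a *\<^sub>R v + b *\<^sub>R u \<in> S"
    using box' by (metis add.assoc add.commute)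
  have close: "dist (p + a *\<^sub>R x + b *\<^sub>R y) p < min d1 d2"
    if "a \<in> {0..s}" "b \<in> {0..s}" "norm x + norm y = norm u + norm v" for a b x y
  proof -
    have "dist (p + a *\<^sub>R x + b *\<^sub>R y) p = norm (a *\<^sub>R x + b *\<^sub>R y)"
      by (simp add: dist_norm)
    also have "\<dots> \<le> a * norm x + b * norm y"
      using that by (metis (no_types, lifting) abs_of_nonneg atLeastAtMost_iff norm_scaleR norm_triangle_ineq)
    also have "\<dots> \<le> s * norm x + s * norm y"
      using that by (intro add_mono mult_right_mono) auto
    also have "\<dots> = s * (norm u + norm v)" using that(3) by (metis distrib_left)
    also have "\<dots> \<le> s * (norm u + norm v + 1)" using s0 by simp
    also have "\<dots> < min d1 d2" using sb d1 d2 by simp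
    finally show ?thesis .
  qed
  obtain a b where ab: "a \<in> {0..s}" "b \<in> {0..s}" and E1:
     "k (p + s *\<^sub>R u + s *\<^sub>R v) - k (p + s *\<^sub>R u) - k (p + s *\<^sub>R v) + k p
       = s * (s * L1 (p + a *\<^sub>R u + b *\<^sub>R v))"
    using mixed_mvt[OF grad hess box' s0] unfolding L1_def by blast
  obtain a' b' where ab': "a' \<in> {0..s}" "b' \<in> {0..s}" and E2:
     "k (p + s *\<^sub>R v + s *\<^sub>R u) - k (p + s *\<^sub>R v) - k (p + s *\<^sub>R u) + k p
       = s * (s * L2 (p + a' *\<^sub>R v + b' *\<^sub>R u))"
    using mixed_mvt[OF grad hess box'' s0] unfolding L2_def by blast
  have "s * (s * L1 (p + a *\<^sub>R u + b *\<^sub>R v)) = s * (s * L2 (p + a' *\<^sub>R v + b' *\<^sub>R u))"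
    using E1 E2 by (simp add: algebra_simps)
  then have eqL: "L1 (p + a *\<^sub>R u + b *\<^sub>R v) = L2 (p + a' *\<^sub>R v + b' *\<^sub>R u)" using s0 by simp
  have "dist (L1 (p + a *\<^sub>R u + b *\<^sub>R v)) (L1 p) < e"
    using d1(2)[OF box'[OF ab]] close[OF ab] by simp
  moreover have "dist (L2 (p + a' *\<^sub>R v + b' *\<^sub>R u)) (L2 p) < e"
    using d2(2)[OF box''[OF ab']] close[OF ab', of v u] by (simp add: add.commute)
  ultimately have "\<bar>L1 p - L2 p\<bar> < 2 * e" using eqL by (simp add: dist_real_def)
  then show False by (simp add: e_def)
qed

lemma space_part_add: "space_part (x + y) = space_part x + space_part y"
  by (simp add: space_part_def vec_eq_iff)
lemma space_part_scale: "space_part (c *\<^sub>R x) = c *\<^sub>R space_part x"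
  by (simp add: space_part_def vec_eq_iff)
lemma time_coord_add: "time_coord (x + y) = time_coord x + time_coord y"
  by (simp add: time_coord_def)
lemma time_coord_scale: "time_coord (c *\<^sub>R x) = c * time_coord x"
  by (simp add: time_coord_def)
lemma norm_space_part_axis: "norm (space_part (axis ix (c::real) :: real^('n::finite option))) \<le> \<bar>c\<bar>"
proof (cases ix)
  case None
  then have "space_part (axis ix c :: real^('n option)) = 0" by (simp add: space_part_def vec_eq_iff axis_def)
  then show ?thesis by simp
next
  case (Some j)
  then have "space_part (axis ix c :: real^('n option)) = axis j c" by (simp add: space_part_def vec_eq_iff axis_def)
  have "axis j c = c *\<^sub>R axis j (1::real)" by (simp add: vec_eq_iff axis_def)
  then show ?thesis using \<open>space_part (axis ix c :: real^('n option)) = axis j c\<close> by simp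
qed

lemma mv_axis_inner: "((A::real^'m::finite^'m) *v axis j c) \<bullet> axis i d = c * d * A $ i $ j"
proof -
  have "(A *v axis j c) $ i = A $ i $ j * c"
    by (simp add: matrix_vector_mult_def axis_def if_distrib cong: if_cong)
  then show ?thesis by (simp add: inner_axis)
qed

lemma H_symmetric:
  fixes D :: "(real^'n::finite) set"
    and k :: "real^('n option) \<Rightarrow> real"
    and g :: "real^('n option) \<Rightarrow> real^('n option)"
    and H :: "real^('n option) \<Rightarrow> real^('n option)^('n option)"
  assumes D: "open D"
    and grad: "\<And>p. p \<in> cyl D \<Longrightarrow> (k has_derivative (\<lambda>h. g p \<bullet> h)) (at p within cyl D)"
    and hess: "\<And>p. p \<in> cyl D \<Longrightarrow> (g has_derivative (\<lambda>h. H p *v h)) (at p within cyl D)"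
    and C2: "continuous_on (cyl D) H"
    and p: "p \<in> cyl D"
  shows "H p $ i $ j = H p $ j $ i"
proof -
  define t where "t = time_coord p"
  have t: "0 \<le> t" "t \<le> 1" "space_part p \<in> D" using p by (auto simp: cyl_def t_def)
  obtain r where r: "r > 0" "ball (space_part p) r \<subseteq> D" using D t(3) openE by blast
  define sg :: "'n option \<Rightarrow> real" where "sg ix = (if ix = None \<and> \<not> t < 1 then -1 else 1)" for ix
  define \<delta> where "\<delta> = min (r/3) (if t < 1 then (1 - t)/2 else 1/2)"
  have d0: "\<delta> > 0" using r t by (simp add: \<delta>_def)
  define u where "u = (axis j (sg j) :: real^('n option))"
  define v where "v = (axis i (sg i) :: real^('n option))"
  have tc: "0 \<le> time_coord (p + a *\<^sub>R axis ix (sg ix) + b *\<^sub>R axis iy (sg iy)) \<and>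
            time_coord (p + a *\<^sub>R axis ix (sg ix) + b *\<^sub>R axis iy (sg iy)) \<le> 1"
    if "a \<in> {0..\<delta>}" "b \<in> {0..\<delta>}" for a b ix iy
  proof -
    have ad: "a \<le> \<delta>" "b \<le> \<delta>" "0 \<le> a" "0 \<le> b" using that by auto
    have eq: "time_coord (p + a *\<^sub>R axis ix (sg ix) + b *\<^sub>R axis iy (sg iy))
       = t + a * (if ix = None then sg ix else 0) + b * (if iy = None then sg iy else 0)"
      by (simp add: time_coord_def t_def axis_def)
    show ?thesis
    proof (cases "t < 1")
      case True
      have "\<delta> \<le> (if t < 1 then (1 - t)/2 else 1/2)" unfolding \<delta>_def by (rule min.cobounded2)
      then have "\<delta> \<le> (1 - t)/2" using True by simp
      then show ?thesis unfolding eq using True ad t by (auto simp: sg_def)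
    next
      case False
      have "\<delta> \<le> (if t < 1 then (1 - t)/2 else 1/2)" unfolding \<delta>_def by (rule min.cobounded2)
      then have "\<delta> \<le> 1/2" using False by simp
      then show ?thesis unfolding eq using False ad t by (auto simp: sg_def)
    qed
  qed
  have sp: "space_part (p + a *\<^sub>R axis ix (sg ix) + b *\<^sub>R axis iy (sg iy)) \<in> D"
    if "a \<in> {0..\<delta>}" "b \<in> {0..\<delta>}" for a b ix iy
  proof -
    have ad: "a \<le> \<delta>" "b \<le> \<delta>" "0 \<le> a" "0 \<le> b" using that by auto
    have s1: "\<bar>sg ix\<bar> = 1" "\<bar>sg iy\<bar> = 1" by (auto simp: sg_def)
    have "norm (space_part (a *\<^sub>R axis ix (sg ix) + b *\<^sub>R axis iy (sg iy))) \<le>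
          a * norm (space_part (axis ix (sg ix) :: real^('n option))) + b * norm (space_part (axis iy (sg iy) :: real^('n option)))"
      using ad by (simp add: space_part_add space_part_scale norm_triangle_le)
    also have "\<dots> \<le> a * 1 + b * 1"
      using ad norm_space_part_axis[of ix "sg ix"] norm_space_part_axis[of iy "sg iy"] s1
      by (intro add_mono mult_left_mono) auto
    also have "\<dots> < r" using ad r by (simp add: \<delta>_def)
    finally have "space_part p + space_part (a *\<^sub>R axis ix (sg ix) + b *\<^sub>R axis iy (sg iy)) \<in> ball (space_part p) r"
      by (simp add: dist_norm)
    then show ?thesis using r by (auto simp: space_part_add add.assoc)
  qed
  have box: "p + a *\<^sub>R u + b *\<^sub>R v \<in> cyl D" if "a \<in> {0..\<delta>}" "b \<in> {0..\<delta>}" for a b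
    using tc[OF that] sp[OF that] unfolding u_def v_def cyl_def by auto
  have "(H p *v u) \<bullet> v = (H p *v v) \<bullet> u"
    by (rule hess_sym_dir[OF grad hess C2 p d0 box])
  then have "sg j * sg i * H p $ i $ j = sg i * sg j * H p $ j $ i"
    by (simp add: u_def v_def mv_axis_inner mult.commute)
  moreover have "sg i \<noteq> 0" "sg j \<noteq> 0" by (auto simp: sg_def)
  ultimately show ?thesis by (simp add: mult.commute)
qed



lemma map_option_perm_eq:
  fixes \<sigma> :: "'n \<Rightarrow> 'n"
  shows "map_option \<sigma> = map_permutation UNIV Some \<sigma>"
proof
  fix x :: "'n option"
  show "map_option \<sigma> x = map_permutation UNIV Some \<sigma> x"
    by (cases x) (auto simp: map_permutation_def restrict_id_def)
qed

lemma map_option_permutes: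
  fixes \<sigma> :: "'n::finite \<Rightarrow> 'n"
  assumes "\<sigma> permutes UNIV"
  shows "map_option \<sigma> permutes UNIV" "sign (map_option \<sigma>) = sign \<sigma>"
proof -
  have b: "bij_betw Some (UNIV::'n set) (range Some)" by (simp add: bij_betw_def)
  have "map_permutation UNIV Some \<sigma> permutes range Some"
    by (rule map_permutation_permutes[OF b assms])
  then show "map_option \<sigma> permutes UNIV"
    by (simp add: map_option_perm_eq permutes_subset)
  show "sign (map_option \<sigma>) = sign \<sigma>"
    unfolding map_option_perm_eq by (rule sign_map_permutation) (use assms in auto)
qed

lemma perms_fix_None:
  "{p. p permutes (UNIV :: 'n::finite option set) \<and> p None = None}
     = map_option ` {\<sigma>. \<sigma> permutes (UNIV :: 'n set)}"
proof
  show "map_option ` {\<sigma>. \<sigma> permutes (UNIV :: 'n set)} \<subseteq> {p. p permutes UNIV \<and> p None = None}"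
    using map_option_permutes by auto
next
  show "{p. p permutes (UNIV :: 'n option set) \<and> p None = None} \<subseteq> map_option ` {\<sigma>. \<sigma> permutes (UNIV :: 'n set)}"
  proof
    fix p :: "'n option \<Rightarrow> 'n option" assume "p \<in> {p. p permutes UNIV \<and> p None = None}"
    then have p: "p permutes UNIV" "p None = None" by auto
    have inj: "inj p" using permutes_inj[OF p(1)] .
    have ns: "p (Some i) \<noteq> None" for i using inj p(2) by (metis injD option.distinct(1))
    define \<sigma> where "\<sigma> i = the (p (Some i))" for i
    have ps: "p (Some i) = Some (\<sigma> i)" for i using ns[of i] by (auto simp: \<sigma>_def)
    have eq: "p = map_option \<sigma>"
    proof
      fix x show "p x = map_option \<sigma> x" by (cases x) (auto simp: p(2) ps)
    qed
    have "\<sigma> permutes UNIV"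
    proof (rule bij_imp_permutes)
      show "bij_betw \<sigma> UNIV UNIV"
        unfolding bij_betw_def
      proof
        show "inj \<sigma>" by (metis injI inj ps injD option.inject)
        have "j \<in> range \<sigma>" for j
        proof -
          obtain x where x: "p x = Some j" using permutes_surj[OF p(1)] by (metis surjD)
          then obtain i where "x = Some i" using p(2) by (cases x) auto
          then have "\<sigma> i = j" using x ps by simp
          then show ?thesis by blast
        qed
        then show "range \<sigma> = UNIV" by blast
      qed
    qed auto
    then show "p \<in> map_option ` {\<sigma>. \<sigma> permutes UNIV}" using eq by auto
  qed
qed

lemma det_lift:
  fixes X :: "'a::comm_ring_1^('n::finite option)^('n option)"
  assumes X0: "\<And>c. X $ None $ c = (if c = None then 1 else 0)"
  shows "det X = det (\<chi> i j. X $ Some i $ Some j :: 'a^'n^'n)"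
proof -
  let ?f = "\<lambda>p. of_int (sign p) * prod (\<lambda>i. X$i$p i) (UNIV :: 'n option set)"
  have "det X = sum ?f {p. p permutes (UNIV :: 'n option set)}" by (simp add: det_def)
  also have "\<dots> = sum ?f {p. p permutes (UNIV :: 'n option set) \<and> p None = None}"
  proof (rule sum.mono_neutral_right)
    show "finite {p. p permutes (UNIV :: 'n option set)}" by (simp add: finite_permutations)
    show "{p. p permutes UNIV \<and> p None = None} \<subseteq> {p. p permutes (UNIV :: 'n option set)}" by auto
    show "\<forall>p\<in>{p. p permutes UNIV} - {p. p permutes UNIV \<and> p None = None}. ?f p = 0"
    proof
      fix p assume "p \<in> {p. p permutes (UNIV :: 'n option set)} - {p. p permutes UNIV \<and> p None = None}"
      then have "p None \<noteq> None" by auto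
      then have "X $ None $ p None = 0" using X0 by simp
      then have "prod (\<lambda>i. X$i$p i) (UNIV :: 'n option set) = 0"
        by (intro prod_zero) auto
      then show "?f p = 0" by simp
    qed
  qed
  also have "\<dots> = sum (?f \<circ> map_option) {\<sigma>. \<sigma> permutes (UNIV :: 'n set)}"
    unfolding perms_fix_None
  proof (rule sum.reindex)
    show "inj_on map_option {\<sigma>. \<sigma> permutes (UNIV :: 'n set)}"
    proof (rule inj_onI)
      fix \<sigma> \<tau> :: "'n \<Rightarrow> 'n" assume "map_option \<sigma> = map_option \<tau>"
      then have "map_option \<sigma> (Some i) = map_option \<tau> (Some i)" for i by simp
      then show "\<sigma> = \<tau>" by auto
    qed
  qed
  also have "\<dots> = sum (\<lambda>\<sigma>. of_int (sign \<sigma>) * prod (\<lambda>i. X $ Some i $ Some (\<sigma> i)) (UNIV :: 'n set))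
                    {\<sigma>. \<sigma> permutes (UNIV :: 'n set)}"
  proof (rule sum.cong[OF refl])
    fix \<sigma> :: "'n \<Rightarrow> 'n" assume "\<sigma> \<in> {\<sigma>. \<sigma> permutes UNIV}"
    then have s: "sign (map_option \<sigma>) = sign \<sigma>" using map_option_permutes by auto
    have U: "(UNIV :: 'n option set) = insert None (range Some)"
      by (metis UNIV_option_conv image_insert image_empty insert_is_Un)
    have "prod (\<lambda>i. X$i$map_option \<sigma> i) (UNIV :: 'n option set)
          = X $ None $ None * prod (\<lambda>i. X$i$map_option \<sigma> i) (range Some)"
      unfolding U by (subst prod.insert) auto
    also have "\<dots> = prod (\<lambda>i. X $ Some i $ Some (\<sigma> i)) (UNIV :: 'n set)"
      using X0 by (subst prod.reindex) (auto simp: inj_on_def)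
    finally show "(?f \<circ> map_option) \<sigma> = of_int (sign \<sigma>) * prod (\<lambda>i. X $ Some i $ Some (\<sigma> i)) (UNIV :: 'n set)"
      using s by simp
  qed
  also have "\<dots> = det (\<chi> i j. X $ Some i $ Some j :: 'a^'n^'n)" by (simp add: det_def)
  finally show ?thesis .
qed

lemma cof_row: "cof B $ i $ j = det (\<chi> r. if r = i then axis j 1 else row r B)"
  unfolding cof_def by (simp add: axis_def row_def vec_eq_iff cong: if_cong) (rule arg_cong[where f=det], simp add: vec_eq_iff)

lemma adj_rows:
  fixes B :: "'a::comm_ring_1^'n::finite^'n"
  shows "(\<Sum>j\<in>UNIV. B$k$j * cof B $ i $ j) = (if k = i then det B else 0)"
proof -
  have "(\<Sum>j\<in>UNIV. B$k$j * cof B $ i $ j)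
      = (\<Sum>j\<in>UNIV. det (\<chi> r. if r = i then B$k$j *s axis j 1 else row r B))"
    unfolding cof_row by (rule sum.cong[OF refl]) (rule det_row_mul[symmetric])
  also have "\<dots> = det (\<chi> r. if r = i then (\<Sum>j\<in>UNIV. B$k$j *s axis j 1) else row r B)"
    by (rule det_linear_row_sum[symmetric]) simp
  also have "(\<Sum>j\<in>UNIV. B$k$j *s axis j 1) = row k B"
    by (simp add: vec_eq_iff axis_def row_def if_distrib cong: if_cong)
  finally have eq: "(\<Sum>j\<in>UNIV. B$k$j * cof B $ i $ j) = det (\<chi> r. if r = i then row k B else row r B)" .
  show ?thesis
  proof (cases "k = i")
    case True
    have "(\<chi> r. if r = i then row k B else row r B) = B"
      using True by (simp add: vec_eq_iff row_def)
    then show ?thesis using eq True by simp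
  next
    case False
    have "det (\<chi> r. if r = i then row k B else row r B) = 0"
      by (rule det_identical_rows[OF False]) (simp add: row_def vec_eq_iff False)
    then show ?thesis using eq False by simp
  qed
qed

lemma rank_null:
  fixes M :: "real^'m::finite^'m"
  assumes sym: "transpose M = M"
  shows "rank M + dim (null_space M) = CARD('m)"
proof -
  have sub: "subspace (range (\<lambda>x. M *v x))"
    by (rule linear_subspace_image[OF matrix_vector_mul_linear subspace_UNIV])
  have "dim {y \<in> UNIV. \<forall>x \<in> range (\<lambda>x. M *v x). orthogonal x y} + dim (range (\<lambda>x. M *v x)) = dim (UNIV :: (real^'m) set)"
    by (rule dim_subspace_orthogonal_to_vectors[OF sub subspace_UNIV]) simp
  moreover have "{y \<in> UNIV. \<forall>x \<in> range (\<lambda>x. M *v x). orthogonal x y} = null_space M"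
  proof -
    have "(\<forall>x. orthogonal (M *v x) y) \<longleftrightarrow> M *v y = 0" for y
    proof -
      have e: "(M *v x) \<bullet> y = x \<bullet> (M *v y)" for x
        by (metis dot_lmul_matrix inner_commute sym transpose_matrix_vector)
      show ?thesis
        unfolding orthogonal_def e
      proof
        assume "\<forall>x. x \<bullet> (M *v y) = 0"
        then have "(M *v y) \<bullet> (M *v y) = 0" by blast
        then show "M *v y = 0" by simp
      qed simp
    qed
    then show ?thesis by (auto simp: null_space_def)
  qed
  ultimately show ?thesis by (simp add: rank_dim_range add.commute)
qed

definition NN :: "real^('n::finite option)^('n option) \<Rightarrow> complex^('n option)^('n option)" where
  "NN A = cmat In_mat + cscale \<i> (cmat A)"

lemma NN_entry: "NN A $ r $ c = (if r = c \<and> r \<noteq> None then 1 else 0) + \<i> * complex_of_real (A $ r $ c)"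
  by (cases r; cases c) (simp_all add: NN_def cmat_def cscale_def In_mat_def)

lemma qf:
  fixes A :: "real^('n::finite option)^('n option)" and u :: "'n option \<Rightarrow> complex"
  assumes sym: "\<And>i j. A$i$j = A$j$i"
  shows "Re (\<Sum>s\<in>UNIV. \<Sum>j\<in>UNIV. NN A $ s $ j * u j * cnj (u s))
         = (\<Sum>s\<in>UNIV. if s = None then 0 else (cmod (u s))\<^sup>2)"
proof -
  define T where "T = (\<Sum>s\<in>UNIV. \<Sum>j\<in>UNIV. complex_of_real (A $ s $ j) * u j * cnj (u s))"
  have e: "NN A $ s $ j * u j * cnj (u s) = (if s = j \<and> s \<noteq> None then u s * cnj (u s) else 0)
            + \<i> * (complex_of_real (A $ s $ j) * u j * cnj (u s))" for s j
    by (cases "s = j \<and> s \<noteq> None") (auto simp: NN_entry algebra_simps)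
  have "(\<Sum>s\<in>UNIV. \<Sum>j\<in>UNIV. NN A $ s $ j * u j * cnj (u s))
      = (\<Sum>s\<in>UNIV. (if s \<noteq> None then u s * cnj (u s) else 0)) + \<i> * T"
  proof -
    have d: "(\<Sum>j\<in>UNIV. (if s = j \<and> s \<noteq> None then u s * cnj (u s) else 0)) = (if s \<noteq> None then u s * cnj (u s) else 0)" for s
      by (cases "s = None") auto
    show ?thesis
      unfolding e T_def sum.distrib d by (simp add: sum_distrib_left)
  qed
  moreover have "cnj T = T"
  proof -
    have "cnj T = (\<Sum>s\<in>UNIV. \<Sum>j\<in>UNIV. complex_of_real (A $ s $ j) * cnj (u j) * u s)"
      by (simp add: T_def)
    also have "\<dots> = (\<Sum>j\<in>UNIV. \<Sum>s\<in>UNIV. complex_of_real (A $ s $ j) * cnj (u j) * u s)"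
      by (rule sum.swap)
    also have "\<dots> = T" unfolding T_def
      by (intro sum.cong refl) (simp add: sym[of _ "_"] mult.commute mult.left_commute)
    finally show ?thesis .
  qed
  then have "Im T = 0" by (metis cnj.simps(2) equation_minus_iff neg_equal_zero)
  moreover have "Re (u s * cnj (u s)) = (cmod (u s))\<^sup>2" for s
    by (simp add: complex_mult_cnj cmod_power2)
  ultimately show ?thesis
    by (simp add: if_distrib Re_sum del: not_None_eq cong: if_cong) (rule sum.cong, auto)
qed

locale slag =
  fixes A :: "real^('n::finite option)^('n option)" and \<theta> :: real
  assumes sym: "\<And>i j. A$i$j = A$j$i"
    and im: "Im (exp (- \<i> * complex_of_real \<theta>) * det (NN A)) = 0"
    and re: "Re (exp (- \<i> * complex_of_real \<theta>) * det (mat 1 + cscale \<i> (cmat (space_block A)))) > 0"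
begin

definition "ee = exp (- \<i> * complex_of_real \<theta>)"
definition "Q r s = ee * cof (NN A) $ s $ r"
definition "c0 = ee * det (NN A)"
definition "cr = Re c0"
definition "z = ee * cof (NN A) $ None $ None"
definition "uv v s = (\<Sum>r\<in>UNIV. Q s r * complex_of_real (v $ r))"
definition qsum :: "('n option \<Rightarrow> complex) \<Rightarrow> real" where "qsum u = (\<Sum>s\<in>UNIV. if s = None then 0 else (cmod (u s))\<^sup>2)"

lemma M_entry: "lin_mat \<theta> A $ r $ s = Re (Q s r)"
  by (simp add: lin_mat_def Re_mat_def cscale_def Q_def ee_def NN_def)

lemma c0_real: "c0 = complex_of_real cr"
  using im by (simp add: c0_def cr_def ee_def complex_eq_iff)

lemma z_re: "Re z > 0"
proof -
  have "cof (NN A) $ None $ None = det (\<chi> r c. if r = None then (if c = None then 1 else 0) else NN A $ r $ c)"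
    by (simp add: cof_def)
  also have "\<dots> = det (\<chi> i j. (\<chi> r c. if r = None then (if c = None then 1 else 0) else NN A $ r $ c) $ Some i $ Some j :: complex^'n^'n)"
    by (rule det_lift) simp
  also have "(\<chi> i j. (\<chi> r c. if r = None then (if c = None then 1 else 0) else NN A $ r $ c) $ Some i $ Some j :: complex^'n^'n)
      = mat 1 + cscale \<i> (cmat (space_block A))"
    by (simp add: vec_eq_iff NN_entry mat_def cscale_def cmat_def space_block_def)
  finally show ?thesis using re by (simp add: z_def ee_def)
qed

lemma N_sym: "NN A $ r $ c = NN A $ c $ r"
  by (auto simp: NN_entry sym)

lemma NQ: "(\<Sum>j\<in>UNIV. NN A $ k $ j * Q j i) = (if k = i then c0 else 0)"
proof -
  have "(\<Sum>j\<in>UNIV. NN A $ k $ j * Q j i) = ee * (\<Sum>j\<in>UNIV. NN A $ k $ j * cof (NN A) $ i $ j)"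
    by (simp add: Q_def sum_distrib_left algebra_simps)
  then show ?thesis by (simp add: adj_rows c0_def)
qed

lemma Nu: "(\<Sum>j\<in>UNIV. NN A $ k $ j * uv v j) = c0 * complex_of_real (v $ k)"
proof -
  have "(\<Sum>j\<in>UNIV. NN A $ k $ j * uv v j) = (\<Sum>j\<in>UNIV. \<Sum>r\<in>UNIV. NN A $ k $ j * Q j r * complex_of_real (v $ r))"
    by (simp add: uv_def sum_distrib_left mult.assoc)
  also have "\<dots> = (\<Sum>r\<in>UNIV. \<Sum>j\<in>UNIV. NN A $ k $ j * Q j r * complex_of_real (v $ r))"
    by (rule sum.swap)
  also have "\<dots> = (\<Sum>r\<in>UNIV. (\<Sum>j\<in>UNIV. NN A $ k $ j * Q j r) * complex_of_real (v $ r))"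
    by (simp add: sum_distrib_right)
  also have "\<dots> = (\<Sum>r\<in>UNIV. if k = r then c0 * complex_of_real (v $ r) else 0)"
    by (intro sum.cong) (auto simp: NQ)
  also have "\<dots> = c0 * complex_of_real (v $ k)"
    by simp
  finally show ?thesis .
qed

lemma vMv: "v \<bullet> (lin_mat \<theta> A *v v) = (\<Sum>s\<in>UNIV. v $ s * Re (uv v s))"
proof -
  have "v \<bullet> (lin_mat \<theta> A *v v) = (\<Sum>r\<in>UNIV. \<Sum>s\<in>UNIV. v $ r * (Re (Q s r) * v $ s))"
    by (simp add: inner_vec_def matrix_vector_mult_def M_entry sum_distrib_left)
  also have "\<dots> = (\<Sum>s\<in>UNIV. \<Sum>r\<in>UNIV. v $ r * (Re (Q s r) * v $ s))"
    by (rule sum.swap)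
  also have "\<dots> = (\<Sum>s\<in>UNIV. v $ s * Re (uv v s))"
    by (simp add: uv_def Re_sum sum_distrib_left sum_distrib_right mult.commute mult.left_commute)
  finally show ?thesis .
qed

lemma key: "cr * (v \<bullet> (lin_mat \<theta> A *v v)) = qsum (uv v)"
proof -
  have "cr * (v \<bullet> (lin_mat \<theta> A *v v)) = (\<Sum>s\<in>UNIV. Re (complex_of_real (cr * v $ s) * cnj (uv v s)))"
    by (simp add: vMv sum_distrib_left mult.assoc)
  also have "\<dots> = Re (\<Sum>s\<in>UNIV. (\<Sum>j\<in>UNIV. NN A $ s $ j * uv v j) * cnj (uv v s))"
    by (simp add: Re_sum Nu c0_real)
  also have "\<dots> = Re (\<Sum>s\<in>UNIV. \<Sum>j\<in>UNIV. NN A $ s $ j * uv v j * cnj (uv v s))"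
    by (simp add: sum_distrib_right)
  also have "\<dots> = qsum (uv v)"
    unfolding qsum_def by (rule qf[OF sym])
  finally show ?thesis .
qed


declare not_None_eq [simp del]

lemma qsum_nonneg: "qsum u \<ge> 0"
  unfolding qsum_def by (intro sum_nonneg) auto

lemma qsum_zero: "qsum u = 0 \<Longrightarrow> s \<noteq> None \<Longrightarrow> u s = 0"
  unfolding qsum_def
  by (subst (asm) sum_nonneg_eq_0_iff) (auto split: if_splits)

lemma M00: "lin_mat \<theta> A $ None $ None = Re z"
  by (simp add: M_entry Q_def z_def)

lemma N_col_None: "NN A $ k $ None = \<i> * complex_of_real (A $ k $ None)"
  by (simp add: NN_entry)

lemma uv_axis: "uv (axis None 1) s = Q s None"
proof -
  have "uv (axis None 1) s = (\<Sum>r\<in>UNIV. if r = None then Q s r else 0)"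
    unfolding uv_def by (intro sum.cong) (auto simp: axis_def)
  then show ?thesis by simp
qed

lemma cr_pos:
  assumes w: "row None A \<noteq> 0"
  shows "cr > 0"
proof -
  define v :: "real^('n option)" where "v = axis None 1"
  define u where "u = uv v"
  have "v \<bullet> (lin_mat \<theta> A *v v) = (lin_mat \<theta> A *v v) \<bullet> v" by (rule inner_commute)
  then have vMv: "v \<bullet> (lin_mat \<theta> A *v v) = Re z"
    by (simp add: v_def mv_axis_inner M00)
  have k: "cr * Re z = qsum u" using key[of v] vMv by (simp add: u_def)
  have z0: "Re z > 0" by (rule z_re)
  have ge: "cr \<ge> 0"
  proof (rule ccontr)
    assume "\<not> cr \<ge> 0"
    then have "cr * Re z < 0" using z0 by (simp add: mult_neg_pos)
    then show False using k qsum_nonneg[of u] by simp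
  qed
  have "cr \<noteq> 0"
  proof
    assume cr0: "cr = 0"
    then have q0: "qsum u = 0" using k by simp
    have ueq: "u = (\<lambda>j. if j = None then z else 0)"
    proof
      fix j show "u j = (if j = None then z else 0)"
        using qsum_zero[OF q0, of j] by (auto simp: u_def v_def uv_axis Q_def z_def)
    qed
    have "A $ k $ None = 0" for k
    proof -
      have "(\<Sum>j\<in>UNIV. NN A $ k $ j * u j) = c0 * complex_of_real (v $ k)"
        unfolding u_def by (rule Nu)
      then have "NN A $ k $ None * z = 0"
        using cr0 c0_real by (simp add: ueq if_distrib cong: if_cong)
      moreover have "z \<noteq> 0" using z0 by auto
      ultimately show ?thesis by (simp add: N_col_None)
    qed
    then have "row None A = 0" by (simp add: row_def vec_eq_iff sym)
    then show False using w by simp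
  qed
  then show ?thesis using ge by simp
qed

lemma Q_sym:
  assumes "cr \<noteq> 0"
  shows "Q a b = Q b a"
proof -
  define S where "S = (\<Sum>k\<in>UNIV. \<Sum>j\<in>UNIV. Q k a * NN A $ k $ j * Q j b)"
  have "S = (\<Sum>k\<in>UNIV. Q k a * (\<Sum>j\<in>UNIV. NN A $ k $ j * Q j b))"
    by (simp add: S_def sum_distrib_left mult.assoc)
  also have "\<dots> = (\<Sum>k\<in>UNIV. if k = b then Q k a * c0 else 0)"
    by (intro sum.cong) (auto simp: NQ)
  finally have S1: "S = Q b a * c0" by simp
  have "S = (\<Sum>j\<in>UNIV. \<Sum>k\<in>UNIV. Q k a * NN A $ k $ j * Q j b)"
    unfolding S_def by (rule sum.swap)
  also have "\<dots> = (\<Sum>j\<in>UNIV. (\<Sum>k\<in>UNIV. NN A $ j $ k * Q k a) * Q j b)"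
  proof (rule sum.cong[OF refl])
    fix j
    show "(\<Sum>k\<in>UNIV. Q k a * NN A $ k $ j * Q j b) = (\<Sum>k\<in>UNIV. NN A $ j $ k * Q k a) * Q j b"
      by (simp add: sum_distrib_right sum_distrib_left N_sym[of _ j] mult.commute mult.left_commute)
  qed
  also have "\<dots> = (\<Sum>j\<in>UNIV. if j = a then c0 * Q j b else 0)"
    by (intro sum.cong) (auto simp: NQ)
  finally have S2: "S = c0 * Q a b" by simp
  have "c0 \<noteq> 0" using assms c0_real by simp
  then show ?thesis using S1 S2 by (simp add: mult.commute)
qed

lemma M_sym: "cr \<noteq> 0 \<Longrightarrow> transpose (lin_mat \<theta> A) = lin_mat \<theta> A"
  by (simp add: vec_eq_iff transpose_def M_entry Q_sym)

lemma M_psd: "cr > 0 \<Longrightarrow> psd (lin_mat \<theta> A)"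
proof -
  assume cr: "cr > 0"
  have "0 \<le> v \<bullet> (lin_mat \<theta> A *v v)" for v
  proof -
    have "cr * (v \<bullet> (lin_mat \<theta> A *v v)) \<ge> 0" using key[of v] qsum_nonneg by simp
    then show ?thesis using cr by (simp add: zero_le_mult_iff)
  qed
  then show ?thesis using M_sym cr by (simp add: psd_def)
qed

lemma Mw: "lin_mat \<theta> A *v row None A = 0"
proof -
  have "(lin_mat \<theta> A *v row None A) $ r = 0" for r
  proof -
    define X where "X = (\<Sum>s\<in>UNIV. complex_of_real (A $ None $ s) * Q s r)"
    have "(lin_mat \<theta> A *v row None A) $ r = Re X"
      by (simp add: X_def matrix_vector_mult_def M_entry row_def Re_sum mult.commute)
    moreover have "\<i> * X = (if None = r then c0 else 0)"
    proof -
      have "\<i> * X = (\<Sum>s\<in>UNIV. NN A $ None $ s * Q s r)"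
        by (simp add: X_def sum_distrib_left NN_entry mult.assoc)
      then show ?thesis by (simp add: NQ)
    qed
    then have "Im (\<i> * X) = 0" using c0_real by simp
    ultimately show ?thesis by simp
  qed
  then show ?thesis by (simp add: vec_eq_iff)
qed

lemma null_eq:
  assumes cr: "cr > 0"
  shows "null_space (lin_mat \<theta> A) = span {row None A}"
proof
  show "null_space (lin_mat \<theta> A) \<subseteq> span {row None A}"
  proof
    fix v assume "v \<in> null_space (lin_mat \<theta> A)"
    then have Mv: "lin_mat \<theta> A *v v = 0" by (simp add: null_space_def)
    define u where "u = uv v"
    have q0: "qsum u = 0" using key[of v] Mv by (simp add: u_def)
    have "v $ k = (Re (\<i> * u None) / cr) * row None A $ k" for k
    proof -
      have "(\<Sum>j\<in>UNIV. NN A $ k $ j * u j) = c0 * complex_of_real (v $ k)"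
        unfolding u_def by (rule Nu)
      moreover have "(\<Sum>j\<in>UNIV. NN A $ k $ j * u j) = NN A $ k $ None * u None"
      proof -
        have "(\<Sum>j\<in>UNIV. NN A $ k $ j * u j) = (\<Sum>j\<in>UNIV. if j = None then NN A $ k $ j * u j else 0)"
        proof (rule sum.cong[OF refl])
          fix j show "NN A $ k $ j * u j = (if j = None then NN A $ k $ j * u j else 0)"
            using qsum_zero[OF q0, of j] by (cases "j = None") auto
        qed
        then show ?thesis by simp
      qed
      ultimately have "complex_of_real (cr * v $ k) = \<i> * u None * complex_of_real (A $ None $ k)"
        using c0_real by (simp add: N_col_None sym[of k] mult.commute mult.left_commute)
      then have "Re (complex_of_real (cr * v $ k)) = Re (\<i> * u None * complex_of_real (A $ None $ k))"
        by simp
      then have "cr * v $ k = Re (\<i> * u None) * A $ None $ k"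
        by simp
      then show ?thesis using cr by (simp add: row_def field_simps)
    qed
    then have "v = (Re (\<i> * u None) / cr) *\<^sub>R row None A" by (simp add: vec_eq_iff)
    then show "v \<in> span {row None A}" by (metis span_base span_mul singletonI)
  qed
next
  show "span {row None A} \<subseteq> null_space (lin_mat \<theta> A)"
  proof
    fix v assume "v \<in> span {row None A}"
    then obtain c where "v = c *\<^sub>R row None A" by (auto simp: span_singleton)
    then show "v \<in> null_space (lin_mat \<theta> A)"
      by (simp add: null_space_def matrix_vector_mult_scaleR Mw)
  qed
qed

lemma case_nonzero:
  assumes w: "row None A \<noteq> 0"
  shows "psd (lin_mat \<theta> A) \<and> rank (lin_mat \<theta> A) = CARD('n)
              \<and> null_space (lin_mat \<theta> A) = span {row None A}"
proof -
  have cr: "cr > 0" by (rule cr_pos[OF w])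
  have ne: "null_space (lin_mat \<theta> A) = span {row None A}" by (rule null_eq[OF cr])
  have "dim (null_space (lin_mat \<theta> A)) = 1"
    using w by (simp add: ne dim_insert)
  moreover have "rank (lin_mat \<theta> A) + dim (null_space (lin_mat \<theta> A)) = CARD('n option)"
    by (rule rank_null[OF M_sym]) (use cr in simp)
  ultimately have "rank (lin_mat \<theta> A) = CARD('n)" by simp
  then show ?thesis using M_psd[OF cr] ne by simp
qed

lemma cof_zero:
  assumes w: "row None A = 0" and ij: "\<not> (i = None \<and> j = None)"
  shows "cof (NN A) $ i $ j = 0"
proof -
  have A0: "A $ None $ c = 0" "A $ c $ None = 0" for c
    using w sym by (auto simp: row_def vec_eq_iff)
  let ?X = "(\<chi> r c. if r = i then (if c = j then 1 else 0) else NN A $ r $ c) :: complex^('n option)^('n option)"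
  have "det ?X = 0"
  proof (cases "i = None")
    case False
    have "row None ?X = 0" using False A0 by (simp add: row_def vec_eq_iff NN_entry)
    then show ?thesis by (rule det_zero_row(2))
  next
    case True
    then have "j \<noteq> None" using ij by simp
    then have "column None ?X = 0" using True A0 by (simp add: column_def vec_eq_iff NN_entry)
    then show ?thesis by (rule det_zero_column(2))
  qed
  then show ?thesis by (simp add: cof_def)
qed

lemma case_zero:
  assumes w: "row None A = 0"
  shows "psd (lin_mat \<theta> A) \<and> rank (lin_mat \<theta> A) = 1"
proof -
  have Me: "lin_mat \<theta> A $ r $ s = (if r = None \<and> s = None then Re z else 0)" for r s
    using cof_zero[OF w, of r s] by (auto simp: M_entry Q_def z_def)
  have T: "transpose (lin_mat \<theta> A) = lin_mat \<theta> A"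
    by (simp add: vec_eq_iff transpose_def Me)
  have Mv: "lin_mat \<theta> A *v v = (Re z * v $ None) *\<^sub>R axis None 1" for v
  proof -
    have "(lin_mat \<theta> A *v v) $ r = (if r = None then Re z * v $ None else 0)" for r
    proof -
      have "(lin_mat \<theta> A *v v) $ r = (\<Sum>j\<in>UNIV. if j = (None :: 'n option) then (if r = None then Re z * v $ None else 0) else 0)"
        unfolding matrix_vector_mult_def vec_lambda_beta proof (rule sum.cong[OF refl])
        fix j show "lin_mat \<theta> A $ r $ j * v $ j = (if j = None then (if r = None then Re z * v $ None else 0) else 0)"
          unfolding Me by (cases "j = None"; cases "r = None") auto
      qed
      then show ?thesis by simp
    qed
    then show ?thesis by (simp add: vec_eq_iff axis_def)
  qed
  have "psd (lin_mat \<theta> A)"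
    unfolding psd_def using T z_re by (simp add: Mv inner_axis mult.assoc)
  moreover have "null_space (lin_mat \<theta> A) = {v. axis None 1 \<bullet> v = 0}"
    using z_re by (auto simp: null_space_def Mv inner_axis' axis_eq_0_iff)
  then have "dim (null_space (lin_mat \<theta> A)) = CARD('n)"
    by (simp add: dim_hyperplane axis_eq_0_iff)
  moreover have "rank (lin_mat \<theta> A) + dim (null_space (lin_mat \<theta> A)) = CARD('n option)"
    by (rule rank_null[OF T])
  ultimately show ?thesis by simp
qed

end


theorem theorem4p1:
  fixes D :: "(real^'n::finite) set" and \<theta> :: real
    and k :: "real^('n option) \<Rightarrow> real"
    and g :: "real^('n option) \<Rightarrow> real^('n option)"
    and H :: "real^('n option) \<Rightarrow> real^('n option)^('n option)"
  assumes D_domain: "open D" "connected D" "D \<noteq> {}"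
    and theta: "-pi < \<theta>" "\<theta> \<le> pi"
    and grad: "\<And>p. p \<in> cyl D \<Longrightarrow> (k has_derivative (\<lambda>h. g p \<bullet> h)) (at p within cyl D)"
    and hess: "\<And>p. p \<in> cyl D \<Longrightarrow> (g has_derivative (\<lambda>h. H p *v h)) (at p within cyl D)"
    and C2: "continuous_on (cyl D) H"
    and eq_im: "\<And>p. p \<in> cyl D \<Longrightarrow>
       Im (exp (- \<i> * complex_of_real \<theta>) * det (cmat In_mat + cscale \<i> (cmat (H p)))) = 0"
    and eq_re: "\<And>p. p \<in> cyl D \<Longrightarrow>
       Re (exp (- \<i> * complex_of_real \<theta>) * det (mat 1 + cscale \<i> (cmat (space_block (H p))))) > 0"
  shows "\<forall>p \<in> cyl D.
           (row None (H p) \<noteq> 0 \<longrightarrow>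
              psd (lin_mat \<theta> (H p)) \<and> rank (lin_mat \<theta> (H p)) = CARD('n)
              \<and> null_space (lin_mat \<theta> (H p)) = span {row None (H p)})
         \<and> (row None (H p) = 0 \<longrightarrow>
              psd (lin_mat \<theta> (H p)) \<and> rank (lin_mat \<theta> (H p)) = 1)"
  proof
  fix p assume p: "p \<in> cyl D"
  have sym: "\<And>i j. H p $ i $ j = H p $ j $ i"
    by (rule H_symmetric[OF D_domain(1) grad hess C2 p])
  interpret slag "H p" \<theta>
  proof
    show "\<And>i j. H p $ i $ j = H p $ j $ i" by (rule sym)
    show "Im (exp (- \<i> * complex_of_real \<theta>) * det (NN (H p))) = 0"
      using eq_im[OF p] by (simp add: NN_def)
    show "0 < Re (exp (- \<i> * complex_of_real \<theta>) * det (mat 1 + cscale \<i> (cmat (space_block (H p)))))"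
      by (rule eq_re[OF p])
  qed
  show "(row None (H p) \<noteq> 0 \<longrightarrow>
              psd (lin_mat \<theta> (H p)) \<and> rank (lin_mat \<theta> (H p)) = CARD('n)
              \<and> null_space (lin_mat \<theta> (H p)) = span {row None (H p)})
         \<and> (row None (H p) = 0 \<longrightarrow>
              psd (lin_mat \<theta> (H p)) \<and> rank (lin_mat \<theta> (H p)) = 1)"
    using case_nonzero case_zero by blast
qed

end
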